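(* Let $\mathbf{f}\colon\mathbb{R}^n\to\mathbb{R}^n$ be a polynomial vector field, let $\mathcal{X}_0,\mathcal{X}_u\subseteq\mathbb{R}^n$, and let $B\in\mathbb{R}[\mathbf{x}]$. If $B$ is an invariant barrier certificate of $\dot{\mathbf{x}}=\mathbf{f}(\mathbf{x})$ with respect to $\mathcal{X}_0$ and $\mathcal{X}_u$, then $\Psi=\{\mathbf{x}\mid B(\mathbf{x})\le 0\}$ is an inductive invariant of the system. Conversely, if $\Psi=\{\mathbf{x}\mid B(\mathbf{x})\le 0\}$ is an inductive invariant of the system satisfying $\mathcal{X}_0\subseteq\Psi$ and $\Psi\cap\mathcal{X}_u=\emptyset$, then $B$ is an invariant barrier certificate of the system with respect to $\mathcal{X}_0$ and $\mathcal{X}_u$.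
   Context: Consider the autonomous system $\dot{\mathbf{x}}=\mathbf{f}(\mathbf{x})$ with $\mathbf{f}$ polynomial. For $\mathbf{x}_0\in\mathbb{R}^n$, $\boldsymbol{\zeta}_{\mathbf{x}_0}\colon[0,T)\to\mathbb{R}^n$ denotes the unique solution with $\boldsymbol{\zeta}_{\mathbf{x}_0}(0)=\mathbf{x}_0$, defined on its maximal interval of existence $[0,T)$, $T\in\mathbb{R}^+\cup\{\infty\}$. A set $\Psi\subseteq\mathbb{R}^n$ is an inductive invariant iff for all $\mathbf{x}_0\in\Psi$ and all $t\in[0,T)$, $\boldsymbol{\zeta}_{\mathbf{x}_0}(t)\in\Psi$. The Lie derivatives of $B$ along $\mathbf{f}$ are $\mathcal{L}^0_{\mathbf{f}}B=B$ and $\mathcal{L}^k_{\mathbf{f}}B=\langle \nabla \mathcal{L}^{k-1}_{\mathbf{f}}B,\mathbf{f}\rangle$ for $k>0$. $N_{B,\mathbf{f}}\in\mathbb{N}^+$ denotes the completeness threshold: the minimal index $i$ such that $\mathcal{L}^{i+1}_{\mathbf{f}}B$ belongs to the polynomial ideal generated by $\mathcal{L}^0_{\mathbf{f}}B,\dots,\mathcal{L}^i_{\mathbf{f}}B$. A polynomial $B$ is an invariant barrier certificate (w.r.t. $\mathcal{X}_0,\mathcal{X}_u$) iff (initial) $B(\mathbf{x})\le 0$ for all $\mathbf{x}\in\mathcal{X}_0$; (consecution) for all $\mathbf{x}\in\mathbb{R}^n$ and all $1\le i\le N_{B,\mathbf{f}}$: if $\mathcal{L}^j_{\mathbf{f}}B(\mathbf{x})=0$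 for all $0\le j\le i-1$, then $\mathcal{L}^i_{\mathbf{f}}B(\mathbf{x})\le 0$; (separation) $B(\mathbf{x})>0$ for all $\mathbf{x}\in\mathcal{X}_u$. *)

theory Defs
  imports "HOL-Analysis.Analysis"
begin

text \<open>Over an infinite field
  these are exactly the functions induced by elements of R[x_1,...,x_n].\<close>

inductive polyfun :: "(real ^ 'n \<Rightarrow> real) \<Rightarrow> bool" where
  pf_const: "polyfun (\<lambda>x. c)"
| pf_coord: "polyfun (\<lambda>x. x $ i)"
| pf_add: "polyfun p \<Longrightarrow> polyfun q \<Longrightarrow> polyfun (\<lambda>x. p x + q x)"
| pf_mult: "polyfun p \<Longrightarrow> polyfun q \<Longrightarrow> polyfun (\<lambda>x. p x * q x)"

definition poly_vf :: "(real ^ 'n \<Rightarrow> real ^ 'n) \<Rightarrow> bool" where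
  "poly_vf f \<longleftrightarrow> (\<forall>i. polyfun (\<lambda>x. f x $ i))"

definition lie_deriv :: "(real ^ 'n \<Rightarrow> real ^ 'n) \<Rightarrow> (real ^ 'n \<Rightarrow> real) \<Rightarrow> (real ^ 'n \<Rightarrow> real)" where
  "lie_deriv f B = (\<lambda>x. frechet_derivative B (at x) (f x))"

definition lie_iter :: "(real ^ 'n \<Rightarrow> real ^ 'n) \<Rightarrow> nat \<Rightarrow> (real ^ 'n \<Rightarrow> real) \<Rightarrow> (real ^ 'n \<Rightarrow> real)" where
  "lie_iter f k B = (lie_deriv f ^^ k) B"

definition in_poly_ideal :: "(real ^ 'n \<Rightarrow> real) \<Rightarrow> (nat \<Rightarrow> real ^ 'n \<Rightarrow> real) \<Rightarrow> nat \<Rightarrow> bool" where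
  "in_poly_ideal p g i \<longleftrightarrow>
     (\<exists>h. (\<forall>j\<le>i. polyfun (h j)) \<and> (\<forall>x. p x = (\<Sum>j\<le>i. h j x * g j x)))"

definition compl_threshold :: "(real ^ 'n \<Rightarrow> real) \<Rightarrow> (real ^ 'n \<Rightarrow> real ^ 'n) \<Rightarrow> nat" where
  "compl_threshold B f =
     (LEAST i. 1 \<le> i \<and> in_poly_ideal (lie_iter f (Suc i) B) (\<lambda>j. lie_iter f j B) i)"

text \<open>Inductive invariant: every solution starting in Psi, on any interval [0,T)
  on which it exists, stays in Psi (equivalent to the maximal-solution formulation,
  since solutions are unique and every solution is a restriction of the maximal one).\<close>
definition inductive_invariant :: "(real ^ 'n \<Rightarrow> real ^ 'n) \<Rightarrow> (real ^ 'n) set \<Rightarrow> bool" where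
  "inductive_invariant f Psi \<longleftrightarrow>
     (\<forall>x0 \<in> Psi. \<forall>(T::real) (z::real \<Rightarrow> real ^ 'n).
        z 0 = x0 \<and> (\<forall>t\<in>{0..<T}. (z has_vector_derivative f (z t)) (at t within {0..<T}))
        \<longrightarrow> (\<forall>t\<in>{0..<T}. z t \<in> Psi))"

definition inv_barrier_cert ::
  "(real ^ 'n \<Rightarrow> real ^ 'n) \<Rightarrow> (real ^ 'n) set \<Rightarrow> (real ^ 'n) set \<Rightarrow> (real ^ 'n \<Rightarrow> real) \<Rightarrow> bool" where
  "inv_barrier_cert f X0 Xu B \<longleftrightarrow>
     (\<forall>x\<in>X0. B x \<le> 0) \<and>
     (\<forall>x. \<forall>i. 1 \<le> i \<and> i \<le> compl_threshold B f \<longrightarrow>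
         (\<forall>j. j \<le> i - 1 \<longrightarrow> lie_iter f j B x = 0) \<longrightarrow> lie_iter f i B x \<le> 0) \<and>
     (\<forall>x\<in>Xu. B x > 0)"

end

theory Submission
  imports Defs "HOL-Library.Function_Algebras" "HOL-Computational_Algebra.Polynomial"
begin

definition ring_set :: "'a::comm_ring_1 set \<Rightarrow> bool" where
 "ring_set R \<longleftrightarrow> 0 \<in> R \<and> 1 \<in> R \<and> (\<forall>x\<in>R. \<forall>y\<in>R. x + y \<in> R \<and> x * y \<in> R \<and> x - y \<in> R)"

definition ideal_in :: "'a::comm_ring_1 set \<Rightarrow> 'a set \<Rightarrow> bool" where
 "ideal_in R I \<longleftrightarrow> I \<subseteq> R \<and> 0 \<in> I \<and> (\<forall>x\<in>I. \<forall>y\<in>I. x + y \<in> I) \<and> (\<forall>r\<in>R. \<forall>x\<in>I. r * x \<in> I)"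

definition gen :: "'a::comm_ring_1 set \<Rightarrow> 'a set \<Rightarrow> 'a set" where
 "gen R G = {x. \<exists>r. (\<forall>g\<in>G. r g \<in> R) \<and> x = (\<Sum>g\<in>G. r g * g)}"

definition noeth :: "'a::comm_ring_1 set \<Rightarrow> bool" where
 "noeth R \<longleftrightarrow> (\<forall>I. ideal_in R I \<longrightarrow> (\<exists>G. finite G \<and> G \<subseteq> I \<and> I \<subseteq> gen R G))"

lemma ring_sum: "ring_set R \<Longrightarrow> (\<And>x. x\<in>A \<Longrightarrow> f x \<in> R) \<Longrightarrow> sum f A \<in> R"
  by (induction A rule: infinite_finite_induct) (auto simp: ring_set_def)

lemma ideal_sum: "ideal_in R I \<Longrightarrow> (\<And>x. x\<in>A \<Longrightarrow> f x \<in> I) \<Longrightarrow> sum f A \<in> I"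
  by (induction A rule: infinite_finite_induct) (auto simp: ideal_in_def)

lemma ideal_minus:
  assumes "ring_set R" "ideal_in R I" "x \<in> I" "y \<in> I" shows "x - y \<in> I"
proof -
  have "(0 - 1) \<in> R" using assms(1) by (auto simp: ring_set_def)
  then have "(0 - 1) * y \<in> I" using assms by (auto simp: ideal_in_def)
  then have "x + (0 - 1) * y \<in> I" using assms by (auto simp: ideal_in_def)
  then show ?thesis by simp
qed

lemma gen_ideal:
  assumes R: "ring_set R" and G: "G \<subseteq> R"
  shows "ideal_in R (gen R G)"
  unfolding ideal_in_def
proof (intro conjI ballI)
  show "gen R G \<subseteq> R"
  proof
    fix x assume "x \<in> gen R G"
    then obtain r where r: "\<forall>g\<in>G. r g \<in> R" "x = (\<Sum>g\<in>G. r g * g)" by (auto simp: gen_def)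
    show "x \<in> R" unfolding r(2) using r(1) G R by (intro ring_sum) (auto simp: ring_set_def)
  qed
  show "0 \<in> gen R G" unfolding gen_def using R
    by (auto simp: ring_set_def intro!: exI[of _ "\<lambda>_. 0"])
  fix x y assume "x \<in> gen R G" "y \<in> gen R G"
  then obtain r s where r: "\<forall>g\<in>G. r g \<in> R" "x = (\<Sum>g\<in>G. r g * g)"
     and s: "\<forall>g\<in>G. s g \<in> R" "y = (\<Sum>g\<in>G. s g * g)" by (auto simp: gen_def)
  show "x + y \<in> gen R G" unfolding gen_def using r s R
    by (auto simp: ring_set_def sum.distrib distrib_right intro!: exI[of _ "\<lambda>g. r g + s g"])
next
  fix c x assume c: "c \<in> R" and "x \<in> gen R G"
  then obtain r where r: "\<forall>g\<in>G. r g \<in> R" "x = (\<Sum>g\<in>G. r g * g)" by (auto simp: gen_def)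
  show "c * x \<in> gen R G" unfolding gen_def using r R c
    by (auto simp: ring_set_def sum_distrib_left mult.assoc intro!: exI[of _ "\<lambda>g. c * r g"])
qed

lemma gen_superset:
  assumes R: "ring_set R" and "finite G" "g \<in> G" shows "g \<in> gen R G"
proof -
  have "(\<Sum>h\<in>G. (if h = g then 1 else 0) * h) = (\<Sum>h\<in>G. (if h = g then h else 0))"
    by (rule sum.cong) auto
  also have "\<dots> = g" using assms by simp
  finally show ?thesis unfolding gen_def using R
    by (auto simp: ring_set_def intro!: exI[of _ "\<lambda>h. if h = g then 1 else 0"])
qed

lemma gen_sub:
  assumes "ideal_in R I" "G \<subseteq> I" shows "gen R G \<subseteq> I"
proof
  fix x assume "x \<in> gen R G"
  then obtain r where r: "\<forall>g\<in>G. r g \<in> R" "x = (\<Sum>g\<in>G. r g * g)" by (auto simp: gen_def)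
  show "x \<in> I" unfolding r(2) using assms r(1)
    by (intro ideal_sum) (auto simp: ideal_in_def)
qed

lemma coeff_const_mult: "coeff ([:c:] * p) n = c * coeff p n"
  by simp

lemma hilbert:
  fixes R :: "'a::comm_ring_1 set"
  assumes R: "ring_set R" and NR: "noeth R"
  shows "noeth {p. \<forall>j. coeff p j \<in> R}"
proof -
  define Q where "Q = {p::'a poly. \<forall>j. coeff p j \<in> R}"
  have RQ: "ring_set Q" unfolding ring_set_def Q_def using R
    by (auto simp: ring_set_def coeff_1 intro!: coeff_mult_semiring_closed)
  have constQ: "[:c:] \<in> Q" if "c \<in> R" for c
    using that R by (auto simp: Q_def ring_set_def coeff_pCons split: nat.splits)
  have monQ: "monom 1 k \<in> Q" for k
    using R by (auto simp: Q_def ring_set_def coeff_monom)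
  have xQ: "[:0, 1:] \<in> Q"
    using R by (auto simp: Q_def ring_set_def coeff_pCons split: nat.splits)
  show ?thesis unfolding Q_def[symmetric] noeth_def
  proof (intro allI impI)
    fix I assume I: "ideal_in Q I"
    have IQ: "p \<in> I \<Longrightarrow> p \<in> Q" for p using I by (auto simp: ideal_in_def)
    have Imul: "q \<in> Q \<Longrightarrow> p \<in> I \<Longrightarrow> q * p \<in> I" for p q using I by (auto simp: ideal_in_def)
    define C where "C d = {coeff p d | p. p \<in> I \<and> degree p \<le> d}" for d
    have CR: "ideal_in R (C d)" for d
      unfolding ideal_in_def
    proof (intro conjI ballI)
      show "C d \<subseteq> R" using IQ by (auto simp: C_def Q_def)
      show "0 \<in> C d" unfolding C_def using I by (auto simp: ideal_in_def intro!: exI[of _ 0])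
      fix x y assume "x \<in> C d" "y \<in> C d"
      then obtain p q where "p \<in> I" "degree p \<le> d" "x = coeff p d" "q \<in> I" "degree q \<le> d" "y = coeff q d"
        by (auto simp: C_def)
      then show "x + y \<in> C d" unfolding C_def using I
        by (auto simp: ideal_in_def intro!: exI[of _ "p + q"] degree_add_le)
    next
      fix r x assume r: "r \<in> R" and "x \<in> C d"
      then obtain p where p: "p \<in> I" "degree p \<le> d" "x = coeff p d" by (auto simp: C_def)
      have "degree ([:r:] * p) \<le> d" using p degree_mult_le[of "[:r:]" p] by simp
      then show "r * x \<in> C d" unfolding C_def using p Imul[OF constQ[OF r] p(1)]
        by (auto intro!: exI[of _ "[:r:] * p"])
    qed
    have Cmono1: "C d \<subseteq> C (Suc d)" for d
    proof
      fix x assume "x \<in> C d"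
      then obtain p where p: "p \<in> I" "degree p \<le> d" "x = coeff p d" by (auto simp: C_def)
      have e: "[:0, 1:] * p = pCons 0 p" by simp
      have "degree (pCons 0 p) \<le> Suc d" using p degree_pCons_le[of 0 p] by simp
      then show "x \<in> C (Suc d)" unfolding C_def using p Imul[OF xQ p(1)] e
        by (auto intro!: exI[of _ "pCons 0 p"])
    qed
    have Cmono: "d \<le> e \<Longrightarrow> C d \<subseteq> C e" for d e
      using lift_Suc_mono_le[of C, OF Cmono1] by blast
    define CU where "CU = (\<Union>d. C d)"
    have CUI: "ideal_in R CU" unfolding ideal_in_def CU_def
    proof (intro conjI ballI)
      show "(\<Union>d. C d) \<subseteq> R" using CR unfolding ideal_in_def by blast
      show "0 \<in> (\<Union>d. C d)" using CR[of 0] by (auto simp: ideal_in_def)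
      fix x y assume "x \<in> (\<Union>d. C d)" "y \<in> (\<Union>d. C d)"
      then obtain d e where "x \<in> C d" "y \<in> C e" by auto
      then have "x \<in> C (max d e)" "y \<in> C (max d e)" using Cmono[of d "max d e"] Cmono[of e "max d e"] by auto
      then show "x + y \<in> (\<Union>d. C d)" using CR[of "max d e"] by (auto simp: ideal_in_def)
    next
      fix r x assume "r \<in> R" "x \<in> (\<Union>d. C d)"
      then obtain d where "r \<in> R" "x \<in> C d" by auto
      then have "r * x \<in> C d" using CR[of d] unfolding ideal_in_def by blast
      then show "r * x \<in> (\<Union>d. C d)" by blast
    qed
    obtain G where G: "finite G" "G \<subseteq> CU" "CU \<subseteq> gen R G" using NR CUI by (auto simp: noeth_def)
    have "\<exists>D. G \<subseteq> C D" using G(1,2)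
    proof (induction G rule: finite_induct)
      case empty then show ?case by auto
    next
      case (insert g G)
      then obtain D where "G \<subseteq> C D" by auto
      moreover obtain e where "g \<in> C e" using insert.prems by (auto simp: CU_def)
      ultimately have "G \<subseteq> C (max D e)" "g \<in> C (max D e)"
        using Cmono[of D "max D e"] Cmono[of e "max D e"] by auto
      then show ?case by auto
    qed
    then obtain D where D: "G \<subseteq> C D" by auto
    have CD: "C d \<subseteq> C D" if "D \<le> d" for d
    proof -
      have "C d \<subseteq> CU" by (auto simp: CU_def)
      also have "\<dots> \<subseteq> gen R G" by (rule G(3))
      also have "\<dots> \<subseteq> C D" by (rule gen_sub[OF CR D])
      finally show ?thesis .
    qed
    define GG where "GG d = (SOME H. finite H \<and> H \<subseteq> C d \<and> C d \<subseteq> gen R H)" for d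
    have GG0: "finite (GG d) \<and> GG d \<subseteq> C d \<and> C d \<subseteq> gen R (GG d)" for d
    proof -
      have "\<exists>H. finite H \<and> H \<subseteq> C d \<and> C d \<subseteq> gen R H" using NR CR[of d] unfolding noeth_def by blast
      then show ?thesis unfolding GG_def by (rule someI_ex)
    qed
    have GG: "\<And>d. finite (GG d)" "\<And>d. GG d \<subseteq> C d" "\<And>d. C d \<subseteq> gen R (GG d)"
      using GG0 by auto
    define W where "W d g = (SOME p. p \<in> I \<and> degree p \<le> d \<and> coeff p d = g)" for d g
    have W: "W d g \<in> I \<and> degree (W d g) \<le> d \<and> coeff (W d g) d = g" if "g \<in> C d" for d g
    proof -
      have "\<exists>p. p \<in> I \<and> degree p \<le> d \<and> coeff p d = g" using that by (auto simp: C_def)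
      then show ?thesis unfolding W_def by (rule someI_ex)
    qed
    define H where "H = (\<Union>d\<in>{..D}. W d ` GG d)"
    have Hfin: "finite H" using GG(1) by (auto simp: H_def)
    have HI: "H \<subseteq> I" using W GG(2) by (auto simp: H_def)
    have HQ: "H \<subseteq> Q" using HI IQ by auto
    have genI: "ideal_in Q (gen Q H)" by (rule gen_ideal[OF RQ HQ])
    have genmul: "q \<in> Q \<Longrightarrow> p \<in> gen Q H \<Longrightarrow> q * p \<in> gen Q H" for p q
      using genI by (auto simp: ideal_in_def)
    have step: "\<forall>p\<in>I. degree p \<le> n \<longrightarrow> p \<in> gen Q H"
      if IH: "\<And>p. p \<in> I \<Longrightarrow> degree p \<le> n \<Longrightarrow> coeff p n = 0 \<Longrightarrow> p \<in> gen Q H" for n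
    proof (intro ballI impI)
      fix p assume pI: "p \<in> I" and pn: "degree p \<le> n"
      define d where "d = min n D"
      have dD: "d \<le> D" "d \<le> n" by (auto simp: d_def)
      have "coeff p n \<in> C n" using pI pn by (auto simp: C_def)
      moreover have "C n \<subseteq> gen R (GG d)"
      proof (cases "n \<le> D")
        case True then show ?thesis using GG(3)[of n] by (simp add: d_def)
      next
        case False then show ?thesis using CD[of n] GG(3)[of D] by (simp add: d_def)
      qed
      ultimately obtain r where r: "\<forall>g\<in>GG d. r g \<in> R" "coeff p n = (\<Sum>g\<in>GG d. r g * g)"
        by (auto simp: gen_def)
      define q where "q = (\<Sum>g\<in>GG d. monom (r g) (n - d) * W d g)"
      have Wd: "W d g \<in> I" "degree (W d g) \<le> d" "coeff (W d g) d = g" if "g \<in> GG d" for g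
        using W[of g d] GG(2)[of d] that by auto
      have mQ: "monom (r g) (n - d) \<in> Q" if "g \<in> GG d" for g
        using R r(1) that by (auto simp: ring_set_def Q_def coeff_monom)
      have qgen: "q \<in> gen Q H" unfolding q_def
      proof (rule ideal_sum[OF genI])
        fix g assume g: "g \<in> GG d"
        have "W d g \<in> H" using g dD by (auto simp: H_def)
        then have "W d g \<in> gen Q H" using gen_superset[OF RQ Hfin] by auto
        then show "monom (r g) (n - d) * W d g \<in> gen Q H" by (rule genmul[OF mQ[OF g]])
      qed
      have qI: "q \<in> I" unfolding q_def
        by (rule ideal_sum[OF I], rule Imul[OF mQ Wd(1)])
      have qdeg: "degree q \<le> n" unfolding q_def
      proof (rule degree_sum_le[OF GG(1)])
        fix g assume g: "g \<in> GG d"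
        have a: "degree (monom (r g) (n - d) * W d g) \<le> degree (monom (r g) (n - d)) + degree (W d g)"
          by (rule degree_mult_le)
        have b: "degree (monom (r g) (n - d)) \<le> n - d" by (rule degree_monom_le)
        show "degree (monom (r g) (n - d) * W d g) \<le> n" using a b Wd(2)[OF g] dD by linarith
      qed
      have qc: "coeff q n = coeff p n"
      proof -
        have "coeff q n = (\<Sum>g\<in>GG d. coeff (monom (r g) (n - d) * W d g) n)"
          unfolding q_def coeff_sum by simp
        also have "\<dots> = (\<Sum>g\<in>GG d. r g * g)"
          by (rule sum.cong) (use dD Wd(3) in \<open>auto simp: coeff_monom_mult\<close>)
        finally show ?thesis using r(2) by simp
      qed
      have "p - q \<in> I" by (rule ideal_minus[OF RQ I pI qI])
      moreover have "degree (p - q) \<le> n" using pn qdeg by (simp add: degree_diff_le)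
      moreover have "coeff (p - q) n = 0" using qc by simp
      ultimately have "p - q \<in> gen Q H" by (rule IH)
      then have "(p - q) + q \<in> gen Q H" using qgen genI unfolding ideal_in_def by blast
      then show "p \<in> gen Q H" by simp
    qed
    have all: "\<forall>p\<in>I. degree p \<le> n \<longrightarrow> p \<in> gen Q H" for n
    proof (induction n)
      case 0
      show ?case
      proof (rule step)
        fix p :: "'a poly" assume "p \<in> I" "degree p \<le> 0" "coeff p 0 = 0"
        have "coeff p j = 0" for j
        proof (cases j)
          case (Suc k) then show ?thesis using \<open>degree p \<le> 0\<close> by (intro coeff_eq_0) simp
        qed (use \<open>coeff p 0 = 0\<close> in simp)
        then have "p = 0" by (intro poly_eqI) simp
        then show "p \<in> gen Q H" using genI by (auto simp: ideal_in_def)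
      qed
    next
      case (Suc m)
      show ?case
      proof (rule step)
        fix p :: "'a poly" assume "p \<in> I" "degree p \<le> Suc m" "coeff p (Suc m) = 0"
        have "\<forall>i>m. coeff p i = 0"
        proof (intro allI impI)
          fix i assume "m < i"
          show "coeff p i = 0"
          proof (cases "i = Suc m")
            case False
            then have "degree p < i" using \<open>m < i\<close> \<open>degree p \<le> Suc m\<close> by simp
            then show ?thesis by (rule coeff_eq_0)
          qed (use \<open>coeff p (Suc m) = 0\<close> in simp)
        qed
        then have "degree p \<le> m" by (rule degree_le)
        then show "p \<in> gen Q H" using Suc \<open>p \<in> I\<close> by auto
      qed
    qed
    show "\<exists>G. finite G \<and> G \<subseteq> I \<and> I \<subseteq> gen Q G"
      using all Hfin HI by (intro exI[of _ H]) auto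
  qed
qed

inductive polyS :: "'n set \<Rightarrow> (real^'n \<Rightarrow> real) \<Rightarrow> bool" for S :: "'n set" where
  ps_const: "polyS S (\<lambda>x. c)"
| ps_coord: "i \<in> S \<Longrightarrow> polyS S (\<lambda>x. x $ i)"
| ps_add: "polyS S p \<Longrightarrow> polyS S q \<Longrightarrow> polyS S (\<lambda>x. p x + q x)"
| ps_mult: "polyS S p \<Longrightarrow> polyS S q \<Longrightarrow> polyS S (\<lambda>x. p x * q x)"

lemma polyfun_polyS: "polyfun p \<longleftrightarrow> polyS UNIV p"
proof
  show "polyfun p \<Longrightarrow> polyS UNIV p"
    by (induction rule: polyfun.induct) (auto intro: polyS.intros)
  show "polyS UNIV p \<Longrightarrow> polyfun p"
    by (induction rule: polyS.induct) (auto intro: polyfun.intros)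
qed

lemma polyS_mono: "polyS S p \<Longrightarrow> S \<subseteq> T \<Longrightarrow> polyS T p"
  by (induction rule: polyS.induct) (auto intro: polyS.intros)

lemma polyS_plus: "polyS S p \<Longrightarrow> polyS S q \<Longrightarrow> polyS S (p + q)"
  by (simp add: func_plus ps_add)

lemma polyS_times: "polyS S p \<Longrightarrow> polyS S q \<Longrightarrow> polyS S (p * q)"
  by (simp add: func_times ps_mult)

lemma polyS_minus: "polyS S p \<Longrightarrow> polyS S q \<Longrightarrow> polyS S (p - q)"
proof -
  assume "polyS S p" "polyS S q"
  then have "polyS S (\<lambda>x. p x + (\<lambda>x. - 1) x * q x)" by (intro ps_add ps_mult ps_const)
  moreover have "(\<lambda>x. p x + (\<lambda>x. - 1) x * q x) = p - q" by (simp add: fun_eq_iff)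
  ultimately show ?thesis by simp
qed

lemma polyS_zero: "polyS S 0" and polyS_one: "polyS S 1"
  by (simp_all add: func_zero func_one ps_const)

lemma ring_polyS: "ring_set {p. polyS S p}"
  unfolding ring_set_def by (auto intro: polyS_zero polyS_one polyS_plus polyS_times polyS_minus)

lemma polyS_empty: "polyS {} p \<Longrightarrow> \<exists>c. p = (\<lambda>x. c)"
  by (induction rule: polyS.induct) auto

lemma noeth_empty: "noeth {p. polyS {} p}"
  unfolding noeth_def
proof (intro allI impI)
  fix I assume I: "ideal_in {p. polyS {} p} I"
  show "\<exists>G. finite G \<and> G \<subseteq> I \<and> I \<subseteq> gen {p. polyS {} p} G"
  proof (cases "I \<subseteq> {0}")
    case True
    then show ?thesis by (intro exI[of _ "{}"]) (auto simp: gen_def)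
  next
    case False
    then obtain c where c: "c \<in> I" "c \<noteq> 0" by auto
    then have "polyS {} c" using I by (auto simp: ideal_in_def)
    then obtain a where a: "c = (\<lambda>x. a)" using polyS_empty by blast
    with c have a0: "a \<noteq> 0" by (auto simp: func_zero)
    have "I \<subseteq> gen {p. polyS {} p} {c}"
    proof
      fix y assume "y \<in> I"
      then have "polyS {} y" using I by (auto simp: ideal_in_def)
      then obtain b where b: "y = (\<lambda>x. b)" using polyS_empty by blast
      have "y = (\<lambda>x. b / a) * c" using a a0 b by (simp add: fun_eq_iff)
      then show "y \<in> gen {p. polyS {} p} {c}" unfolding gen_def
        by (auto intro!: exI[of _ "\<lambda>_. (\<lambda>x. b / a)"] ps_const)
    qed
    then show ?thesis using c by (intro exI[of _ "{c}"]) auto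
  qed
qed

lemma polyS_coeff_mult:
  assumes "\<forall>j. polyS S (coeff c j)" "\<forall>j. polyS S (coeff d j)" shows "polyS S (coeff (c * d) j)"
proof -
  have "coeff (c * d) j \<in> {p. polyS S p}"
    by (rule coeff_mult_semiring_closed) (auto intro: polyS_zero polyS_plus polyS_times simp: assms)
  then show ?thesis by simp
qed

lemma polyS_poly:
  "(\<forall>j. polyS S (coeff c j)) \<Longrightarrow> polyS (insert a S) (poly c (\<lambda>x. x $ a))"
proof (induction c rule: pCons_induct)
  case 0
  then show ?case using ps_const[of "insert a S" 0] by (simp add: func_zero)
next
  case (pCons b p)
  have "polyS S b" using pCons.prems[rule_format, of 0] by simp
  moreover have "\<forall>j. polyS S (coeff p j)" using pCons.prems[rule_format, of "Suc j" for j] by simp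
  ultimately have "polyS (insert a S) b" "polyS (insert a S) (poly p (\<lambda>x. x $ a))"
    using pCons.IH polyS_mono[of S b "insert a S"] by auto
  moreover have "polyS (insert a S) (\<lambda>x. x $ a)" by (auto intro: ps_coord)
  ultimately show ?case by (simp only: poly_pCons) (intro polyS_plus polyS_times)
qed

lemma polyS_insert_image:
  "{p. polyS (insert a S) p} = (\<lambda>c. poly c (\<lambda>x. x $ a)) ` {c. \<forall>j. coeff c j \<in> {p. polyS S p}}"
proof
  show "(\<lambda>c. poly c (\<lambda>x. x $ a)) ` {c. \<forall>j. coeff c j \<in> {p. polyS S p}} \<subseteq> {p. polyS (insert a S) p}"
    using polyS_poly by auto
  show "{p. polyS (insert a S) p} \<subseteq> (\<lambda>c. poly c (\<lambda>x. x $ a)) ` {c. \<forall>j. coeff c j \<in> {p. polyS S p}}"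
  proof
    fix p assume "p \<in> {p. polyS (insert a S) p}"
    then have "polyS (insert a S) p" by simp
    then show "p \<in> (\<lambda>c. poly c (\<lambda>x. x $ a)) ` {c. \<forall>j. coeff c j \<in> {p. polyS S p}}"
    proof (induction rule: polyS.induct)
      case (ps_const k)
      have "poly [:(\<lambda>x. k):] (\<lambda>x. x $ a) = (\<lambda>x. k)" by simp
      moreover have "\<forall>j. coeff [:(\<lambda>x. k):] j \<in> {p. polyS S p}"
      proof
        fix j
        have "polyS S (\<lambda>x. k)" by (rule ps_const)
        then show "coeff [:(\<lambda>x. k):] j \<in> {p. polyS S p}"
          by (cases j) (auto simp: polyS_zero)
      qed
      ultimately show ?case by (intro image_eqI[where x = "[:(\<lambda>x. k):]"]) auto
    next
      case (ps_coord i)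
      show ?case
      proof (cases "i = a")
        case True
        have "poly [:0, 1:] (\<lambda>x. x $ a) = (\<lambda>x. x $ a :: real)" by (simp add: fun_eq_iff)
        moreover have "\<forall>j. coeff [:0, 1:] j \<in> {p. polyS S p}"
          by (auto simp: coeff_pCons polyS_zero polyS_one split: nat.splits)
        ultimately show ?thesis using True by (intro image_eqI[where x = "[:0, 1:]"]) auto
      next
        case False
        then have "i \<in> S" using ps_coord by auto
        have "poly [:(\<lambda>x. x $ i):] (\<lambda>x. x $ a) = (\<lambda>x. x $ i)" by simp
        moreover have "\<forall>j. coeff [:(\<lambda>x. x $ i):] j \<in> {p. polyS S p}"
        proof
          fix j
          have "polyS S (\<lambda>x. x $ i)" by (rule polyS.ps_coord[OF \<open>i \<in> S\<close>])
          then show "coeff [:(\<lambda>x. x $ i):] j \<in> {p. polyS S p}"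
            by (cases j) (auto simp: polyS_zero)
        qed
        ultimately show ?thesis by (intro image_eqI[where x = "[:(\<lambda>x. x $ i):]"]) auto
      qed
    next
      case (ps_add p q)
      then obtain c d where c: "\<forall>j. coeff c j \<in> {p. polyS S p}" "p = poly c (\<lambda>x. x $ a)"
        and d: "\<forall>j. coeff d j \<in> {p. polyS S p}" "q = poly d (\<lambda>x. x $ a)" by auto
      have "(\<lambda>x. p x + q x) = poly (c + d) (\<lambda>x. x $ a)" using c d by (simp add: func_plus)
      moreover have "\<forall>j. coeff (c + d) j \<in> {p. polyS S p}" using c d by (auto intro: polyS_plus)
      ultimately show ?case by (intro image_eqI[where x = "c + d"]) auto
    next
      case (ps_mult p q)
      then obtain c d where c: "\<forall>j. coeff c j \<in> {p. polyS S p}" "p = poly c (\<lambda>x. x $ a)"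
        and d: "\<forall>j. coeff d j \<in> {p. polyS S p}" "q = poly d (\<lambda>x. x $ a)" by auto
      have "(\<lambda>x. p x * q x) = poly (c * d) (\<lambda>x. x $ a)" using c d by (simp add: func_times)
      moreover have "\<forall>j. coeff (c * d) j \<in> {p. polyS S p}"
        using c d polyS_coeff_mult by auto
      ultimately show ?case by (intro image_eqI[where x = "c * d"]) auto
    qed
  qed
qed

lemma hom_sum:
  assumes "ring_set Q" "\<And>x y. x\<in>Q \<Longrightarrow> y\<in>Q \<Longrightarrow> \<phi> (x+y) = \<phi> x + \<phi> y" "\<phi> 0 = 0"
  shows "(\<And>x. x \<in> A \<Longrightarrow> f x \<in> Q) \<Longrightarrow> \<phi> (sum f A) = (\<Sum>x\<in>A. \<phi> (f x))"
proof (induction A rule: infinite_finite_induct)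
  case (insert x F)
  then have "sum f F \<in> Q" using ring_sum[OF assms(1), of F f] by auto
  then show ?case using insert assms(2) by auto
qed (use assms in auto)

lemma noeth_image:
  fixes \<phi> :: "'a::comm_ring_1 \<Rightarrow> 'b::comm_ring_1"
  assumes RQ: "ring_set Q" and NQ: "noeth Q"
    and hadd: "\<And>x y. x\<in>Q \<Longrightarrow> y\<in>Q \<Longrightarrow> \<phi> (x+y) = \<phi> x + \<phi> y"
    and hmul: "\<And>x y. x\<in>Q \<Longrightarrow> y\<in>Q \<Longrightarrow> \<phi> (x*y) = \<phi> x * \<phi> y"
    and h0: "\<phi> 0 = 0"
    and P: "P = \<phi> ` Q" and RP: "ring_set P"
  shows "noeth P"
  unfolding noeth_def
proof (intro allI impI)
  fix J assume J: "ideal_in P J"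
  define I where "I = {q\<in>Q. \<phi> q \<in> J}"
  have I: "ideal_in Q I" unfolding ideal_in_def I_def
  proof (intro conjI ballI)
    show "0 \<in> {q \<in> Q. \<phi> q \<in> J}" using RQ J h0 by (auto simp: ring_set_def ideal_in_def)
    fix x y assume x: "x \<in> {q \<in> Q. \<phi> q \<in> J}" and y: "y \<in> {q \<in> Q. \<phi> q \<in> J}"
    then show "x + y \<in> {q \<in> Q. \<phi> q \<in> J}" using RQ J hadd by (auto simp: ring_set_def ideal_in_def)
  next
    fix r x assume r: "r \<in> Q" and x: "x \<in> {q \<in> Q. \<phi> q \<in> J}"
    then have "\<phi> r \<in> P" using P by auto
    then show "r * x \<in> {q \<in> Q. \<phi> q \<in> J}" using r x RQ J hmul by (auto simp: ring_set_def ideal_in_def)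
  qed auto
  obtain G where G: "finite G" "G \<subseteq> I" "I \<subseteq> gen Q G" using NQ I by (auto simp: noeth_def)
  have GQ: "G \<subseteq> Q" using G(2) by (auto simp: I_def)
  have phiGP: "\<phi> ` G \<subseteq> P" using GQ P by auto
  have genP: "ideal_in P (gen P (\<phi> ` G))" by (rule gen_ideal[OF RP phiGP])
  have "J \<subseteq> gen P (\<phi> ` G)"
  proof
    fix y assume y: "y \<in> J"
    then have "y \<in> P" using J by (auto simp: ideal_in_def)
    then obtain q where q: "q \<in> Q" "y = \<phi> q" using P by auto
    then have "q \<in> I" using y by (auto simp: I_def)
    then obtain r where r: "\<forall>g\<in>G. r g \<in> Q" "q = (\<Sum>g\<in>G. r g * g)" using G(3) by (auto simp: gen_def)
    have "y = (\<Sum>g\<in>G. \<phi> (r g * g))"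
      using q r GQ RQ by (auto intro!: hom_sum[OF RQ hadd h0] simp: ring_set_def)
    also have "\<dots> = (\<Sum>g\<in>G. \<phi> (r g) * \<phi> g)"
      using r GQ hmul by (intro sum.cong) auto
    also have "\<dots> \<in> gen P (\<phi> ` G)"
    proof (rule ideal_sum[OF genP])
      fix g assume g: "g \<in> G"
      have "\<phi> g \<in> gen P (\<phi> ` G)" using gen_superset[OF RP] G(1) g by auto
      moreover have "\<phi> (r g) \<in> P" using r g P by auto
      ultimately show "\<phi> (r g) * \<phi> g \<in> gen P (\<phi> ` G)" using genP unfolding ideal_in_def by blast
    qed
    finally show "y \<in> gen P (\<phi> ` G)" .
  qed
  then show "\<exists>G. finite G \<and> G \<subseteq> J \<and> J \<subseteq> gen P G"
    using G(1,2) by (intro exI[of _ "\<phi> ` G"]) (auto simp: I_def)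
qed

lemma noeth_polyS: "finite S \<Longrightarrow> noeth {p. polyS S p}"
proof (induction S rule: finite_induct)
  case empty
  then show ?case by (rule noeth_empty)
next
  case (insert a S)
  have NQ: "noeth {c. \<forall>j. coeff c j \<in> {p. polyS S p}}"
    by (rule hilbert[OF ring_polyS insert.IH])
  have RQ: "ring_set {c. \<forall>j. coeff c j \<in> {p. polyS S p}}"
    by (auto simp: ring_set_def coeff_1 intro: polyS_coeff_mult polyS_zero polyS_one polyS_plus polyS_minus)
  show ?case
    apply (rule noeth_image[where \<phi> = "\<lambda>c. poly c (\<lambda>x. x $ a)", OF RQ NQ])
        apply (simp add: poly_add)
       apply (simp add: poly_mult)
      apply simp
     apply (rule polyS_insert_image)
    apply (rule ring_polyS)
    done
qed

lemma noeth_polyfun: "noeth {p::real^'n \<Rightarrow> real. polyfun p}"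
  using noeth_polyS[of "UNIV :: 'n set"] by (simp add: polyfun_polyS)

lemma polyfun_sum: "(\<And>j. j \<in> A \<Longrightarrow> polyfun (F j)) \<Longrightarrow> polyfun (\<lambda>x. \<Sum>j\<in>A. F j x)"
proof (induction A rule: infinite_finite_induct)
  case (infinite A) then show ?case by (simp add: pf_const)
next
  case empty then show ?case by (simp add: pf_const)
next
  case (insert a A) then show ?case by (simp add: pf_add)
qed

lemma ring_polyfun: "ring_set {p::real^'n \<Rightarrow> real. polyfun p}"
  using ring_polyS[of "UNIV :: 'n set"] by (simp add: polyfun_polyS)

lemma chain_stab:
  fixes L :: "nat \<Rightarrow> real^'n \<Rightarrow> real"
  assumes PL: "\<And>k. polyfun (L k)"
  shows "\<exists>i\<ge>1. in_poly_ideal (L (Suc i)) L i"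
proof -
  define P where "P = {p::real^'n \<Rightarrow> real. polyfun p}"
  have RP: "ring_set P" unfolding P_def by (rule ring_polyfun)
  define J where "J m = {p. \<exists>h. (\<forall>j\<le>m. polyfun (h j)) \<and> p = (\<lambda>x. \<Sum>j\<le>m. h j x * L j x)}" for m
  have JmemI: "p \<in> J m" if "\<forall>j\<le>m. polyfun (h j)" "p = (\<lambda>x. \<Sum>j\<le>m. h j x * L j x)" for p m h
    using that unfolding J_def by blast
  have JI: "ideal_in P (J m)" for m
    unfolding ideal_in_def
  proof (intro conjI ballI)
    show "J m \<subseteq> P"
    proof
      fix p assume "p \<in> J m"
      then obtain h where h: "\<forall>j\<le>m. polyfun (h j)" "p = (\<lambda>x. \<Sum>j\<le>m. h j x * L j x)" by (auto simp: J_def)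
      have "polyfun (\<lambda>x. \<Sum>j\<le>m. h j x * L j x)"
        by (rule polyfun_sum, rule pf_mult) (use h(1) PL in auto)
      then show "p \<in> P" using h(2) by (simp add: P_def)
    qed
    have "0 = (\<lambda>x::real^'n. \<Sum>j\<le>m. (\<lambda>x. 0) x * L j x)" by (simp add: func_zero)
    moreover have "\<forall>j\<le>m. polyfun (\<lambda>x::real^'n. 0)" by (simp add: pf_const)
    ultimately show "0 \<in> J m" by (rule JmemI[rotated])
    fix p q assume "p \<in> J m" "q \<in> J m"
    then obtain h g where h: "\<forall>j\<le>m. polyfun (h j)" "p = (\<lambda>x. \<Sum>j\<le>m. h j x * L j x)"
      and g: "\<forall>j\<le>m. polyfun (g j)" "q = (\<lambda>x. \<Sum>j\<le>m. g j x * L j x)" by (auto simp: J_def)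
    have "p + q = (\<lambda>x. \<Sum>j\<le>m. (\<lambda>x. h j x + g j x) x * L j x)"
      using h(2) g(2) by (simp add: func_plus sum.distrib distrib_right)
    moreover have "\<forall>j\<le>m. polyfun (\<lambda>x. h j x + g j x)" using h(1) g(1) by (simp add: pf_add)
    ultimately show "p + q \<in> J m" by (rule JmemI[rotated])
  next
    fix r p assume r: "r \<in> P" and "p \<in> J m"
    then obtain h where h: "\<forall>j\<le>m. polyfun (h j)" "p = (\<lambda>x. \<Sum>j\<le>m. h j x * L j x)" by (auto simp: J_def)
    have "r * p = (\<lambda>x. \<Sum>j\<le>m. (\<lambda>x. r x * h j x) x * L j x)"
      using h(2) by (simp add: func_times sum_distrib_left mult.assoc)
    moreover have "\<forall>j\<le>m. polyfun (\<lambda>x. r x * h j x)" using h(1) r by (simp add: pf_mult P_def)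
    ultimately show "r * p \<in> J m" by (rule JmemI[rotated])
  qed
  have Jmono: "J m \<subseteq> J m'" if "m \<le> m'" for m m'
  proof
    fix p assume "p \<in> J m"
    then obtain h where h: "\<forall>j\<le>m. polyfun (h j)" "p = (\<lambda>x. \<Sum>j\<le>m. h j x * L j x)" by (auto simp: J_def)
    define h' where "h' j = (if j \<le> m then h j else (\<lambda>x. 0))" for j
    have "(\<Sum>j\<le>m'. h' j x * L j x) = (\<Sum>j\<le>m. h' j x * L j x)" for x
      by (rule sum.mono_neutral_right) (use that in \<open>auto simp: h'_def\<close>)
    also have "(\<Sum>j\<le>m. h' j x * L j x) = (\<Sum>j\<le>m. h j x * L j x)" for x
      by (rule sum.cong) (auto simp: h'_def)
    finally have "p = (\<lambda>x. \<Sum>j\<le>m'. h' j x * L j x)" using h by simp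
    moreover have "\<forall>j\<le>m'. polyfun (h' j)" using h by (auto simp: h'_def pf_const)
    ultimately show "p \<in> J m'" by (rule JmemI[rotated])
  qed
  have LJ: "L j \<in> J j" for j
  proof -
    have "(\<Sum>k\<le>j. (if k = j then 1 else 0) * L k x) = L j x" for x
    proof -
      have "(\<Sum>k\<le>j. (if k = j then 1 else 0) * L k x) = (\<Sum>k\<le>j. (if k = j then L k x else 0))"
        by (rule sum.cong) auto
      then show ?thesis by simp
    qed
    then have "L j = (\<lambda>x. \<Sum>k\<le>j. (\<lambda>x. if k = j then 1 else 0) x * L k x)" by (simp add: fun_eq_iff)
    moreover have "\<forall>k\<le>j. polyfun (\<lambda>x::real^'n. if k = j then 1 else 0)" by (simp add: pf_const)
    ultimately show ?thesis by (rule JmemI[rotated])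
  qed
  define JU where "JU = (\<Union>m. J m)"
  have JUI: "ideal_in P JU" unfolding ideal_in_def JU_def
  proof (intro conjI ballI)
    show "(\<Union>m. J m) \<subseteq> P" using JI unfolding ideal_in_def by blast
    show "0 \<in> (\<Union>m. J m)" using JI[of 0] unfolding ideal_in_def by blast
    fix x y assume "x \<in> (\<Union>m. J m)" "y \<in> (\<Union>m. J m)"
    then obtain d e where "x \<in> J d" "y \<in> J e" by auto
    then have "x \<in> J (max d e)" "y \<in> J (max d e)" using Jmono[of d "max d e"] Jmono[of e "max d e"] by auto
    then have "x + y \<in> J (max d e)" using JI[of "max d e"] unfolding ideal_in_def by blast
    then show "x + y \<in> (\<Union>m. J m)" by blast
  next
    fix r x assume "r \<in> P" "x \<in> (\<Union>m. J m)"
    then obtain d where "r \<in> P" "x \<in> J d" by auto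
    then have "r * x \<in> J d" using JI[of d] unfolding ideal_in_def by blast
    then show "r * x \<in> (\<Union>m. J m)" by blast
  qed
  obtain G where G: "finite G" "G \<subseteq> JU" "JU \<subseteq> gen P G"
    using noeth_polyfun JUI unfolding noeth_def P_def by blast
  have "\<exists>M. G \<subseteq> J M" using G(1,2)
  proof (induction G rule: finite_induct)
    case empty then show ?case by auto
  next
    case (insert g G)
    then obtain D where "G \<subseteq> J D" by auto
    moreover obtain e where "g \<in> J e" using insert.prems by (auto simp: JU_def)
    ultimately have "G \<subseteq> J (max D e)" "g \<in> J (max D e)"
      using Jmono[of D "max D e"] Jmono[of e "max D e"] by auto
    then show ?case by auto
  qed
  then obtain M where M: "G \<subseteq> J M" by auto
  define i where "i = max M 1"
  have "L (Suc i) \<in> JU" using LJ[of "Suc i"] by (auto simp: JU_def)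
  also have "\<dots> \<subseteq> gen P G" by (rule G(3))
  also have "\<dots> \<subseteq> J M" by (rule gen_sub[OF JI M])
  also have "\<dots> \<subseteq> J i" by (rule Jmono) (simp add: i_def)
  finally have "L (Suc i) \<in> J i" .
  then have "in_poly_ideal (L (Suc i)) L i" unfolding in_poly_ideal_def J_def by auto
  then show ?thesis by (intro exI[of _ i]) (simp add: i_def)
qed

lemma polyfun_deriv_ex:
  assumes f: "poly_vf f" and p: "polyfun p"
  shows "\<exists>D. (\<forall>x. (p has_derivative D x) (at x)) \<and> polyfun (\<lambda>x. D x (f x))"
  using p
proof (induction rule: polyfun.induct)
  case (pf_const c)
  show ?case by (intro exI[of _ "\<lambda>x h. 0"]) (auto intro: polyfun.pf_const)
next
  case (pf_coord i)
  have "((\<lambda>x. x $ i) has_derivative (\<lambda>h. h $ i)) (at x)" for x :: "real^'a"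
    by (rule bounded_linear_imp_has_derivative[OF bounded_linear_vec_nth])
  moreover have "polyfun (\<lambda>x. f x $ i)" using f by (simp add: poly_vf_def)
  ultimately show ?case by (intro exI[of _ "\<lambda>x h. h $ i"]) auto
next
  case (pf_add p q)
  then obtain D1 D2 where "\<forall>x. (p has_derivative D1 x) (at x)" "polyfun (\<lambda>x. D1 x (f x))"
    "\<forall>x. (q has_derivative D2 x) (at x)" "polyfun (\<lambda>x. D2 x (f x))" by blast
  then show ?case
    by (intro exI[of _ "\<lambda>x h. D1 x h + D2 x h"] conjI allI has_derivative_add polyfun.pf_add) auto
next
  case (pf_mult p q)
  then obtain D1 D2 where "\<forall>x. (p has_derivative D1 x) (at x)" "polyfun (\<lambda>x. D1 x (f x))"
    "\<forall>x. (q has_derivative D2 x) (at x)" "polyfun (\<lambda>x. D2 x (f x))" by blast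
  then show ?case
    by (intro exI[of _ "\<lambda>x h. p x * D2 x h + D1 x h * q x"] conjI allI has_derivative_mult
        polyfun.pf_add polyfun.pf_mult pf_mult.hyps) auto
qed

lemma polyfun_has_derivative:
  assumes "polyfun p" shows "(p has_derivative frechet_derivative p (at x)) (at x)"
proof -
  have "poly_vf (\<lambda>x. x)" unfolding poly_vf_def by (auto intro: pf_coord)
  then obtain D where "\<forall>x. (p has_derivative D x) (at x)" using polyfun_deriv_ex assms by blast
  then have "p differentiable (at x)" unfolding differentiable_def by blast
  then show ?thesis by (simp add: frechet_derivative_works[symmetric])
qed

lemma polyfun_lie: "poly_vf f \<Longrightarrow> polyfun p \<Longrightarrow> polyfun (lie_deriv f p)"
proof -
  assume f: "poly_vf f" and p: "polyfun p"
  obtain D where D: "\<forall>x. (p has_derivative D x) (at x)" "polyfun (\<lambda>x. D x (f x))"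
    using polyfun_deriv_ex[OF f p] by blast
  have "D x = frechet_derivative p (at x)" for x using D(1) by (intro frechet_derivative_at) blast
  then have "lie_deriv f p = (\<lambda>x. D x (f x))"
    unfolding lie_deriv_def by simp
  then show ?thesis using D(2) by simp
qed

lemma lie_iter_Suc: "lie_iter f (Suc k) B = lie_deriv f (lie_iter f k B)"
  by (simp add: lie_iter_def)

lemma lie_iter_0: "lie_iter f 0 B = B"
  by (simp add: lie_iter_def)

lemma polyfun_lie_iter: "poly_vf f \<Longrightarrow> polyfun B \<Longrightarrow> polyfun (lie_iter f k B)"
  by (induction k) (auto simp: lie_iter_0 lie_iter_Suc polyfun_lie)

lemma polyfun_continuous: "polyfun p \<Longrightarrow> continuous_on S p"
  by (rule has_derivative_continuous_on) (auto intro: has_derivative_at_withinI polyfun_has_derivative)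

lemma chain_traj:
  assumes p: "polyfun p" and z: "(z has_vector_derivative f (z t)) (at t within S)"
  shows "((\<lambda>t. p (z t)) has_real_derivative lie_deriv f p (z t)) (at t within S)"
proof -
  let ?D = "frechet_derivative p (at (z t))"
  have pd: "(p has_derivative ?D) (at (z t))" by (rule polyfun_has_derivative[OF p])
  have zd: "(z has_derivative (\<lambda>h. h *\<^sub>R f (z t))) (at t within S)"
    using z by (simp add: has_vector_derivative_def)
  have "(p \<circ> z has_derivative ?D \<circ> (\<lambda>h. h *\<^sub>R f (z t))) (at t within S)"
    by (rule diff_chain_within[OF zd has_derivative_at_withinI[OF pd]])
  moreover have "?D \<circ> (\<lambda>h. h *\<^sub>R f (z t)) = (*) (?D (f (z t)))"
    using linear_cmul[OF has_derivative_linear[OF pd]] by (auto simp: fun_eq_iff)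
  ultimately show ?thesis
    by (simp add: has_field_derivative_def lie_deriv_def o_def)
qed

lemma threshold:
  assumes "poly_vf f" "polyfun B"
  shows "1 \<le> compl_threshold B f \<and>
    in_poly_ideal (lie_iter f (Suc (compl_threshold B f)) B) (\<lambda>j. lie_iter f j B) (compl_threshold B f)"
proof -
  have "\<exists>i\<ge>1. in_poly_ideal (lie_iter f (Suc i) B) (\<lambda>j. lie_iter f j B) i"
    by (rule chain_stab[of "\<lambda>j. lie_iter f j B"]) (rule polyfun_lie_iter[OF assms])
  then show ?thesis unfolding compl_threshold_def by (rule LeastI_ex[where P = "\<lambda>i. 1 \<le> i \<and> _ i"]) 
qed

lemma sign_lemma:
  fixes g :: "nat \<Rightarrow> real \<Rightarrow> real"
  assumes sb: "s < b"
    and der: "\<And>k t. k < i \<Longrightarrow> t \<in> {s..b} \<Longrightarrow> (g k has_real_derivative g (Suc k) t) (at t within {s..b})"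
    and cont: "continuous_on {s..b} (g i)"
    and zero: "\<And>k. k < i \<Longrightarrow> g k s = 0"
    and neg: "g i s < 0"
  shows "\<exists>e>0. \<forall>t. s < t \<and> t < s + e \<and> t \<le> b \<longrightarrow> g 0 t < 0"
proof -
  have "\<exists>e>0. \<forall>t. s < t \<and> t < s + e \<and> t \<le> b \<longrightarrow> g (i - k) t < 0" if "k \<le> i" for k
    using that
  proof (induction k)
    case 0
    have "s \<in> {s..b}" using sb by auto
    moreover have "- g i s > 0" using neg by simp
    ultimately obtain d where d: "d > 0" "\<forall>t\<in>{s..b}. dist t s < d \<longrightarrow> dist (g i t) (g i s) < - g i s"
      using cont unfolding continuous_on_iff by blast
    show ?case
    proof (intro exI[of _ d] conjI allI impI)
      fix t assume t: "s < t \<and> t < s + d \<and> t \<le> b"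
      then have "dist (g i t) (g i s) < - g i s" using d(2) by (auto simp: dist_real_def)
      then show "g (i - 0) t < 0" by (auto simp: dist_real_def)
    qed (rule d(1))
  next
    case (Suc k)
    then obtain e where e: "e > 0" "\<forall>t. s < t \<and> t < s + e \<and> t \<le> b \<longrightarrow> g (i - k) t < 0" by auto
    define j where "j = i - Suc k"
    have j: "j < i" "Suc j = i - k" using Suc.prems by (auto simp: j_def)
    show ?case
    proof (intro exI[of _ e] conjI allI impI)
      fix t assume t: "s < t \<and> t < s + e \<and> t \<le> b"
      have "(g j has_derivative (*) (g (Suc j) x)) (at x within {s..t})" if "s \<le> x" "x \<le> t" for x
      proof -
        have "(g j has_real_derivative g (Suc j) x) (at x within {s..b})"
          using der[OF j(1)] that t by auto
        then have "(g j has_real_derivative g (Suc j) x) (at x within {s..t})"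
          by (rule DERIV_subset) (use t in auto)
        then show ?thesis by (simp add: has_field_derivative_def)
      qed
      then obtain x where x: "x \<in> {s<..<t}" "g j t - g j s = g (Suc j) x * (t - s)"
        using mvt_simple[of s t "g j" "\<lambda>x. (*) (g (Suc j) x)"] t by auto
      have "g (Suc j) x < 0" using e(2) x(1) t j(2) by auto
      moreover have "g j s = 0" using zero[OF j(1)] .
      ultimately have "g j t < 0" using x t by (simp add: mult_neg_pos)
      then show "g (i - Suc k) t < 0" by (simp add: j_def)
    qed (rule e(1))
  qed
  from this[of i] show ?thesis by simp
qed

lemma zero_lemma:
  fixes g c :: "nat \<Rightarrow> real \<Rightarrow> real"
  assumes sb: "s < b"
   and der: "\<And>k t. k \<le> N \<Longrightarrow> t \<in> {s..b} \<Longrightarrow> (g k has_real_derivative g (Suc k) t) (at t within {s..b})"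
   and lin: "\<And>t. t \<in> {s..b} \<Longrightarrow> g (Suc N) t = (\<Sum>j\<le>N. c j t * g j t)"
   and bnd: "\<And>j t. j \<le> N \<Longrightarrow> t \<in> {s..b} \<Longrightarrow> \<bar>c j t\<bar> \<le> M"
   and zero: "\<And>k. k \<le> N \<Longrightarrow> g k s = 0"
  shows "\<exists>e>0. \<forall>t. s < t \<and> t < s + e \<and> t \<le> b \<longrightarrow> g 0 t \<le> 0"
proof -
  have M0: "0 \<le> M" using bnd[of 0 s] sb by auto
  define K where "K = real (Suc N) * (1 + M)"
  have K0: "K > 0" using M0 by (simp add: K_def)
  define h where "h = min (b - s) (1 / (2 * K))"
  have h0: "h > 0" using sb K0 by (simp add: h_def)
  have hb: "s + h \<le> b" by (simp add: h_def)
  have hK: "h * K \<le> 1 / 2"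
  proof -
    have "h \<le> 1 / (2 * K)" by (simp add: h_def)
    then have "h * K \<le> 1 / (2 * K) * K" using K0 by (intro mult_right_mono) auto
    also have "\<dots> = 1 / 2" using K0 by simp
    finally show ?thesis .
  qed
  define F where "F t = (\<Sum>k\<le>N. \<bar>g k t\<bar>)" for t
  have contg: "continuous_on {s..b} (g k)" if "k \<le> N" for k
    unfolding continuous_on_eq_continuous_within
    using der[OF that] DERIV_continuous by blast
  have contF: "continuous_on {s..s+h} F"
    unfolding F_def
    by (intro continuous_on_sum continuous_on_rabs, rule continuous_on_subset[OF contg]) (use hb in auto)
  obtain t0 where t0: "t0 \<in> {s..s+h}" "\<forall>y\<in>{s..s+h}. F y \<le> F t0"
    using continuous_attains_sup[OF compact_Icc _ contF] h0 by auto
  define m where "m = F t0"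
  have Fge: "0 \<le> F y" for y unfolding F_def by (intro sum_nonneg) auto
  have m0: "0 \<le> m" using Fge by (simp add: m_def)
  have Fle: "F y \<le> m" if "y \<in> {s..s+h}" for y using t0 that by (simp add: m_def)
  have gle: "\<bar>g k t\<bar> \<le> h * ((1 + M) * m)" if k: "k \<le> N" and t: "t \<in> {s..s+h}" for k t
  proof (cases "t = s")
    case True
    then show ?thesis using zero[OF k] h0 M0 m0 by simp
  next
    case False
    then have st: "s < t" using t by auto
    have "(g k has_derivative (*) (g (Suc k) x)) (at x within {s..t})" if "s \<le> x" "x \<le> t" for x
    proof -
      have "(g k has_real_derivative g (Suc k) x) (at x within {s..b})"
        using der[OF k] that t hb by auto
      then have "(g k has_real_derivative g (Suc k) x) (at x within {s..t})"
        by (rule DERIV_subset) (use t hb in auto)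
      then show ?thesis by (simp add: has_field_derivative_def)
    qed
    then obtain x where x: "x \<in> {s<..<t}" "g k t - g k s = g (Suc k) x * (t - s)"
      using mvt_simple[of s t "g k" "\<lambda>x. (*) (g (Suc k) x)"] st by auto
    have xS: "x \<in> {s..s+h}" using x(1) t by auto
    have xb: "x \<in> {s..b}" using xS hb by auto
    have gx: "\<bar>g (Suc k) x\<bar> \<le> (1 + M) * m"
    proof (cases "k < N")
      case True
      have "\<bar>g (Suc k) x\<bar> \<le> F x" unfolding F_def
        by (rule member_le_sum[of "Suc k" "{..N}" "\<lambda>k. \<bar>g k x\<bar>"]) (use True in auto)
      also have "\<dots> \<le> m" using Fle[OF xS] .
      also have "\<dots> \<le> (1 + M) * m" using M0 m0 by (simp add: algebra_simps)
      finally show ?thesis .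
    next
      case False
      then have kN: "k = N" using k by simp
      have "\<bar>g (Suc k) x\<bar> = \<bar>\<Sum>j\<le>N. c j x * g j x\<bar>" using lin[OF xb] kN by simp
      also have "\<dots> \<le> (\<Sum>j\<le>N. \<bar>c j x * g j x\<bar>)" by (rule sum_abs)
      also have "\<dots> \<le> (\<Sum>j\<le>N. M * \<bar>g j x\<bar>)"
        by (rule sum_mono) (use bnd xb in \<open>auto simp: abs_mult intro: mult_right_mono\<close>)
      also have "\<dots> = M * F x" by (simp add: F_def sum_distrib_left)
      also have "\<dots> \<le> M * m" using Fle[OF xS] M0 by (intro mult_left_mono)
      also have "\<dots> \<le> (1 + M) * m" using m0 by (simp add: algebra_simps)
      finally show ?thesis .
    qed
    have "\<bar>g k t\<bar> = \<bar>g (Suc k) x\<bar> * (t - s)" using x(2) zero[OF k] st by (simp add: abs_mult)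
    also have "\<dots> \<le> ((1 + M) * m) * h" using gx st t by (intro mult_mono) auto
    finally show ?thesis by (simp add: algebra_simps)
  qed
  have "m = (\<Sum>k\<le>N. \<bar>g k t0\<bar>)" by (simp add: m_def F_def)
  also have "\<dots> \<le> (\<Sum>k\<le>N. h * ((1 + M) * m))"
    by (rule sum_mono) (use gle t0(1) in auto)
  also have "\<dots> = (h * K) * m" by (simp add: K_def algebra_simps)
  also have "\<dots> \<le> (1 / 2) * m" using hK m0 by (intro mult_right_mono)
  finally have m00: "m = 0" using m0 by simp
  show ?thesis
  proof (intro exI[of _ h] conjI allI impI h0)
    fix t assume t: "s < t \<and> t < s + h \<and> t \<le> b"
    then have "\<bar>g 0 t\<bar> \<le> F t" unfolding F_def by (intro member_le_sum[of 0 "{..N}" "\<lambda>k. \<bar>g k t\<bar>"]) auto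
    also have "\<dots> \<le> 0" using Fle[of t] t m00 by auto
    finally show "g 0 t \<le> 0" by simp
  qed
qed

lemma polyfun_cont: "polyfun p \<Longrightarrow> continuous_on S p"
  by (induction rule: polyfun.induct) (auto intro!: continuous_intros)

lemma polyfun_lip:
  "polyfun p \<Longrightarrow> \<exists>M L. \<forall>y\<in>cball c r. \<forall>w\<in>cball c r. \<bar>p y\<bar> \<le> M \<and> \<bar>p y - p w\<bar> \<le> L * dist y w"
proof (induction rule: polyfun.induct)
  case (pf_const k)
  show ?case by (intro exI[of _ "\<bar>k\<bar>"] exI[of _ 0]) auto
next
  case (pf_coord i)
  have "\<bar>y $ i\<bar> \<le> norm c + r \<and> \<bar>y $ i - w $ i\<bar> \<le> 1 * dist y w"
    if "y \<in> cball c r" "w \<in> cball c r" for y w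
  proof
    have "\<bar>y $ i\<bar> \<le> norm y" by (rule component_le_norm_cart)
    also have "\<dots> \<le> norm c + norm (y - c)" using norm_triangle_ineq[of c "y - c"] by simp
    also have "norm (y - c) = dist c y" by (simp add: dist_norm norm_minus_commute)
    also have "\<dots> \<le> r" using that by simp
    finally show "\<bar>y $ i\<bar> \<le> norm c + r" by simp
    have "\<bar>y $ i - w $ i\<bar> = \<bar>(y - w) $ i\<bar>" by simp
    also have "\<dots> \<le> norm (y - w)" by (rule component_le_norm_cart)
    finally show "\<bar>y $ i - w $ i\<bar> \<le> 1 * dist y w" by (simp add: dist_norm)
  qed
  then show ?case by blast
next
  case (pf_add p q)
  then obtain M1 L1 M2 L2 where
    1: "\<forall>y\<in>cball c r. \<forall>w\<in>cball c r. \<bar>p y\<bar> \<le> M1 \<and> \<bar>p y - p w\<bar> \<le> L1 * dist y w" and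
    2: "\<forall>y\<in>cball c r. \<forall>w\<in>cball c r. \<bar>q y\<bar> \<le> M2 \<and> \<bar>q y - q w\<bar> \<le> L2 * dist y w" by blast
  have "\<bar>p y + q y\<bar> \<le> M1 + M2 \<and> \<bar>p y + q y - (p w + q w)\<bar> \<le> (L1 + L2) * dist y w"
    if "y \<in> cball c r" "w \<in> cball c r" for y w
    using 1[rule_format, OF that] 2[rule_format, OF that] by (auto simp: algebra_simps)
  then show ?case by blast
next
  case (pf_mult p q)
  then obtain M1 L1 M2 L2 where
    1: "\<forall>y\<in>cball c r. \<forall>w\<in>cball c r. \<bar>p y\<bar> \<le> M1 \<and> \<bar>p y - p w\<bar> \<le> L1 * dist y w" and
    2: "\<forall>y\<in>cball c r. \<forall>w\<in>cball c r. \<bar>q y\<bar> \<le> M2 \<and> \<bar>q y - q w\<bar> \<le> L2 * dist y w" by blast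
  have "\<bar>p y * q y\<bar> \<le> M1 * M2 \<and> \<bar>p y * q y - p w * q w\<bar> \<le> (M1 * L2 + L1 * M2) * dist y w"
    if y: "y \<in> cball c r" and w: "w \<in> cball c r" for y w
  proof
    have a: "\<bar>p y\<bar> \<le> M1" "\<bar>q y\<bar> \<le> M2" "\<bar>q w\<bar> \<le> M2" "\<bar>p y - p w\<bar> \<le> L1 * dist y w"
      "\<bar>q y - q w\<bar> \<le> L2 * dist y w"
      using 1[rule_format, OF y w] 2[rule_format, OF y w] 2[rule_format, OF w y] by auto
    have M1: "0 \<le> M1" using a(1) by linarith
    show "\<bar>p y * q y\<bar> \<le> M1 * M2" unfolding abs_mult using a M1 by (intro mult_mono) auto
    have "\<bar>p y * q y - p w * q w\<bar> = \<bar>p y * (q y - q w) + (p y - p w) * q w\<bar>" by (simp add: algebra_simps)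
    also have "\<dots> \<le> \<bar>p y\<bar> * \<bar>q y - q w\<bar> + \<bar>p y - p w\<bar> * \<bar>q w\<bar>"
      using abs_triangle_ineq by (metis abs_mult)
    also have "\<dots> \<le> M1 * (L2 * dist y w) + (L1 * dist y w) * M2"
      using a M1 by (intro add_mono mult_mono) auto
    finally show "\<bar>p y * q y - p w * q w\<bar> \<le> (M1 * L2 + L1 * M2) * dist y w" by (simp add: algebra_simps)
  qed
  then show ?case by blast
qed

lemma vf_lip:
  fixes f :: "real^'n \<Rightarrow> real^'n"
  assumes f: "poly_vf f"
  shows "\<exists>M L. 0 \<le> M \<and> 0 \<le> L \<and> (\<forall>y\<in>cball c r. \<forall>w\<in>cball c r. norm (f y) \<le> M \<and> norm (f y - f w) \<le> L * dist y w)"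
proof -
  have "\<forall>i. \<exists>AB. \<forall>y\<in>cball c r. \<forall>w\<in>cball c r. \<bar>f y $ i\<bar> \<le> fst AB \<and> \<bar>f y $ i - f w $ i\<bar> \<le> snd AB * dist y w"
  proof
    fix i
    have "polyfun (\<lambda>x. f x $ i)" using f by (simp add: poly_vf_def)
    from polyfun_lip[OF this, of c r] obtain M L where
      "\<forall>y\<in>cball c r. \<forall>w\<in>cball c r. \<bar>f y $ i\<bar> \<le> M \<and> \<bar>f y $ i - f w $ i\<bar> \<le> L * dist y w" by blast
    then show "\<exists>AB. \<forall>y\<in>cball c r. \<forall>w\<in>cball c r. \<bar>f y $ i\<bar> \<le> fst AB \<and> \<bar>f y $ i - f w $ i\<bar> \<le> snd AB * dist y w"
      by (intro exI[of _ "(M, L)"]) simp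
  qed
  then obtain AB where AB: "\<And>i. \<forall>y\<in>cball c r. \<forall>w\<in>cball c r. \<bar>f y $ i\<bar> \<le> fst (AB i) \<and> \<bar>f y $ i - f w $ i\<bar> \<le> snd (AB i) * dist y w"
    using choice[of "\<lambda>i AB. \<forall>y\<in>cball c r. \<forall>w\<in>cball c r. \<bar>f y $ i\<bar> \<le> fst AB \<and> \<bar>f y $ i - f w $ i\<bar> \<le> snd AB * dist y w"]
    by blast
  define M where "M = (\<Sum>i\<in>UNIV. \<bar>fst (AB i)\<bar>)"
  define L where "L = (\<Sum>i\<in>UNIV. \<bar>snd (AB i)\<bar>)"
  have "norm (f y) \<le> M \<and> norm (f y - f w) \<le> L * dist y w" if y: "y \<in> cball c r" and w: "w \<in> cball c r" for y w
  proof
    have "norm (f y) \<le> (\<Sum>i\<in>UNIV. \<bar>f y $ i\<bar>)" by (rule norm_le_l1_cart)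
    also have "\<dots> \<le> M" unfolding M_def
    proof (rule sum_mono)
      fix i
      have "\<bar>f y $ i\<bar> \<le> fst (AB i)" using AB[of i, rule_format, OF y w] by simp
      then show "\<bar>f y $ i\<bar> \<le> \<bar>fst (AB i)\<bar>" by simp
    qed
    finally show "norm (f y) \<le> M" .
    have "norm (f y - f w) \<le> (\<Sum>i\<in>UNIV. \<bar>(f y - f w) $ i\<bar>)" by (rule norm_le_l1_cart)
    also have "\<dots> \<le> (\<Sum>i\<in>UNIV. \<bar>snd (AB i)\<bar> * dist y w)"
    proof (rule sum_mono)
      fix i
      have "\<bar>(f y - f w) $ i\<bar> \<le> snd (AB i) * dist y w" using AB[of i, rule_format, OF y w] by simp
      also have "\<dots> \<le> \<bar>snd (AB i)\<bar> * dist y w" by (intro mult_right_mono) auto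
      finally show "\<bar>(f y - f w) $ i\<bar> \<le> \<bar>snd (AB i)\<bar> * dist y w" .
    qed
    also have "\<dots> = L * dist y w" by (simp add: L_def sum_distrib_right)
    finally show "norm (f y - f w) \<le> L * dist y w" .
  qed
  moreover have "0 \<le> M" "0 \<le> L" by (auto simp: M_def L_def intro: sum_nonneg)
  ultimately show ?thesis by blast
qed

lemma local_existence:
  fixes f :: "real^'n \<Rightarrow> real^'n" and x0 :: "real^'n"
  assumes f: "poly_vf f"
  shows "\<exists>\<delta>>0. \<exists>z. z 0 = x0 \<and> (\<forall>t\<in>{0..<\<delta>}. (z has_vector_derivative f (z t)) (at t within {0..<\<delta>}))"
proof -
  obtain M L where Kb: "0 \<le> M" "0 \<le> L"
    "\<And>y w. y \<in> cball x0 1 \<Longrightarrow> w \<in> cball x0 1 \<Longrightarrow> norm (f y) \<le> M \<and> norm (f y - f w) \<le> L * dist y w"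
    using vf_lip[OF f, of x0 1] by blast
  define \<delta> where "\<delta> = 1 / (2 * (M + L + 1))"
  have d0: "0 < \<delta>" using Kb by (simp add: \<delta>_def)
  have dM: "\<delta> * M \<le> 1"
  proof -
    have "\<delta> * M \<le> \<delta> * (2 * (M + L + 1))" using Kb d0 by (intro mult_left_mono) auto
    also have "\<dots> = 1" using Kb by (simp add: \<delta>_def)
    finally show ?thesis .
  qed
  have dL: "\<delta> * L \<le> 1 / 2"
  proof -
    have "\<delta> * L \<le> \<delta> * (M + L + 1)" using Kb d0 by (intro mult_left_mono) auto
    also have "\<dots> = 1 / 2" using Kb by (simp add: \<delta>_def)
    finally show ?thesis .
  qed
  have fcont: "continuous_on S f" for S
  proof -
    have "continuous_on S (\<lambda>x. \<chi> i. f x $ i)"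
      using f by (intro continuous_on_vec_lambda polyfun_cont) (auto simp: poly_vf_def)
    then show ?thesis by simp
  qed
  define cl where "cl t = max 0 (min \<delta> t)" for t :: real
  have cl_in: "cl t \<in> {0..\<delta>}" for t using d0 by (auto simp: cl_def)
  have cl_id: "t \<in> {0..\<delta>} \<Longrightarrow> cl t = t" for t by (auto simp: cl_def)
  have cl_cont: "continuous_on UNIV cl" unfolding cl_def by (intro continuous_intros)
  define X where "X = {u :: (real, real^'n) bcontfun. \<forall>t. apply_bcontfun u t \<in> cball x0 1}"
  define \<phi> where "\<phi> u t = x0 + integral {0..t} (\<lambda>s. f (apply_bcontfun u s))" for u :: "(real, real^'n) bcontfun" and t :: real
  have gcont: "continuous_on S (\<lambda>s. f (apply_bcontfun u s))" for u :: "(real, real^'n) bcontfun" and S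
    by (rule continuous_on_compose2[OF fcont[of UNIV]]) auto
  have gint: "(\<lambda>s. f (apply_bcontfun u s)) integrable_on {a..b}" for u :: "(real, real^'n) bcontfun" and a b :: real
    by (rule integrable_continuous_interval) (rule gcont)
  have phi_cont: "continuous_on {0..\<delta>} (\<phi> u)" for u :: "(real, real^'n) bcontfun"
    unfolding \<phi>_def by (intro continuous_intros indefinite_integral_continuous_1 gint)
  have phi_bound: "\<phi> u t \<in> cball x0 1" if u: "u \<in> X" and t: "t \<in> {0..\<delta>}" for u t
  proof -
    have "norm (integral {0..t} (\<lambda>s. f (apply_bcontfun u s))) \<le> M * Henstock_Kurzweil_Integration.content {0..t}"
    proof (rule has_integral_bound_real[where S = "{}"])
      show "((\<lambda>s. f (apply_bcontfun u s)) has_integral integral {0..t} (\<lambda>s. f (apply_bcontfun u s))) {0..t}"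
        using gint by (rule integrable_integral)
      fix x show "norm (f (apply_bcontfun u x)) \<le> M"
        using Kb(3)[of "apply_bcontfun u x" "apply_bcontfun u x"] u by (auto simp: X_def)
    qed (use Kb in auto)
    also have "\<dots> = M * t" using t by simp
    also have "\<dots> \<le> M * \<delta>" using t Kb by (intro mult_left_mono) auto
    also have "\<dots> \<le> 1" using dM by (simp add: mult.commute)
    finally show ?thesis by (simp add: \<phi>_def dist_norm)
  qed
  define \<Phi> where "\<Phi> u = Bcontfun (\<lambda>t. \<phi> u (cl t))" for u
  have Phi_apply: "apply_bcontfun (\<Phi> u) t = \<phi> u (cl t)" if u: "u \<in> X" for u t
  proof -
    have "(\<lambda>t. \<phi> u (cl t)) \<in> bcontfun"
      unfolding bcontfun_def
    proof (intro CollectI conjI)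
      show "continuous_on UNIV (\<lambda>t. \<phi> u (cl t))"
        by (rule continuous_on_compose2[OF phi_cont cl_cont]) (use cl_in in auto)
      have "range (\<lambda>t. \<phi> u (cl t)) \<subseteq> cball x0 1" using phi_bound[OF u cl_in] by auto
      then show "bounded (range (\<lambda>t. \<phi> u (cl t)))" by (rule bounded_subset[OF bounded_cball])
    qed
    then show ?thesis by (simp add: \<Phi>_def Bcontfun_inverse)
  qed
  have PhiX: "\<Phi> ` X \<subseteq> X"
    using Phi_apply phi_bound cl_in by (auto simp: X_def)
  have contr: "dist (\<Phi> u) (\<Phi> v) \<le> (1 / 2) * dist u v" if u: "u \<in> X" and v: "v \<in> X" for u v
  proof (rule dist_bound)
    fix t
    define c where "c = cl t"
    have c: "c \<in> {0..\<delta>}" using cl_in by (simp add: c_def)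
    have "dist (\<phi> u c) (\<phi> v c) = norm (integral {0..c} (\<lambda>s. f (apply_bcontfun u s)) - integral {0..c} (\<lambda>s. f (apply_bcontfun v s)))"
      by (simp add: \<phi>_def dist_norm)
    also have "\<dots> = norm (integral {0..c} (\<lambda>s. f (apply_bcontfun u s) - f (apply_bcontfun v s)))"
      by (simp add: integral_diff[OF gint gint])
    also have "\<dots> \<le> (L * dist u v) * Henstock_Kurzweil_Integration.content {0..c}"
    proof (rule has_integral_bound_real[where S = "{}"])
      show "((\<lambda>s. f (apply_bcontfun u s) - f (apply_bcontfun v s)) has_integral
          integral {0..c} (\<lambda>s. f (apply_bcontfun u s) - f (apply_bcontfun v s))) {0..c}"
        by (rule integrable_integral, rule integrable_diff[OF gint gint])
      fix x
      have "norm (f (apply_bcontfun u x) - f (apply_bcontfun v x)) \<le> L * dist (apply_bcontfun u x) (apply_bcontfun v x)"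
        using Kb(3)[of "apply_bcontfun u x" "apply_bcontfun v x"] u v by (auto simp: X_def)
      also have "\<dots> \<le> L * dist u v" using Kb(2) dist_bounded by (intro mult_left_mono) auto
      finally show "norm (f (apply_bcontfun u x) - f (apply_bcontfun v x)) \<le> L * dist u v" .
    qed (use Kb in auto)
    also have "\<dots> = (L * dist u v) * c" using c by simp
    also have "\<dots> \<le> (L * dist u v) * \<delta>" using c Kb by (intro mult_left_mono) auto
    also have "\<dots> = (\<delta> * L) * dist u v" by simp
    also have "\<dots> \<le> (1 / 2) * dist u v" using dL by (intro mult_right_mono) auto
    finally show "dist (apply_bcontfun (\<Phi> u) t) (apply_bcontfun (\<Phi> v) t) \<le> 1 / 2 * dist u v"
      using Phi_apply[OF u] Phi_apply[OF v] by (simp add: c_def)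
  qed
  have evcont: "continuous_on UNIV (\<lambda>u :: (real, real^'n) bcontfun. apply_bcontfun u t)" for t
    unfolding continuous_on_iff
  proof (intro ballI allI impI)
    fix u :: "(real, real^'n) bcontfun" and e :: real assume "e > 0"
    then show "\<exists>d>0. \<forall>v\<in>UNIV. dist v u < d \<longrightarrow> dist (apply_bcontfun v t) (apply_bcontfun u t) < e"
      by (intro exI[of _ e]) (auto intro: le_less_trans[OF dist_bounded])
  qed
  have closedX: "closed X"
  proof -
    have "X = (\<Inter>t. {u. dist x0 (apply_bcontfun u t) \<le> 1})" by (auto simp: X_def)
    also have "closed \<dots>"
      by (intro closed_INT ballI closed_Collect_le continuous_on_dist continuous_on_const evcont)
    finally show ?thesis .
  qed
  have "const_bcontfun x0 \<in> X" by (simp add: X_def const_bcontfun.rep_eq)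
  then have Xne: "X \<noteq> {}" by auto
  obtain u where u: "u \<in> X" "\<Phi> u = u"
    using Banach_fix[OF _ Xne _ _ PhiX contr] closedX by (auto simp: complete_eq_closed)
  define z where "z t = \<phi> u t" for t
  have uz: "apply_bcontfun u t = z t" if "t \<in> {0..\<delta>}" for t
    using Phi_apply[OF u(1), of t] u(2) cl_id[OF that] by (simp add: z_def)
  have "z 0 = x0" by (simp add: z_def \<phi>_def)
  moreover have "(z has_vector_derivative f (z t)) (at t within {0..<\<delta>})" if t: "t \<in> {0..<\<delta>}" for t
  proof -
    have t': "t \<in> {0..\<delta>}" using t by auto
    have "((\<lambda>t. integral {0..t} (\<lambda>s. f (apply_bcontfun u s))) has_vector_derivative f (apply_bcontfun u t)) (at t within {0..\<delta>})"
      by (rule integral_has_vector_derivative[OF gcont t'])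
    then have "(z has_vector_derivative 0 + f (apply_bcontfun u t)) (at t within {0..\<delta>})"
      unfolding z_def \<phi>_def by (intro has_vector_derivative_add) auto
    then have "(z has_vector_derivative f (z t)) (at t within {0..\<delta>})" using uz[OF t'] by simp
    then show ?thesis by (rule has_vector_derivative_within_subset) auto
  qed
  ultimately show ?thesis using d0 by blast
qed

theorem theorem4:
  fixes f :: "real ^ 'n \<Rightarrow> real ^ 'n" and B :: "real ^ 'n \<Rightarrow> real"
    and X0 Xu :: "(real ^ 'n) set"
  assumes "poly_vf f" and "polyfun B"
  shows "(inv_barrier_cert f X0 Xu B \<longrightarrow> inductive_invariant f {x. B x \<le> 0})
       \<and> (inductive_invariant f {x. B x \<le> 0} \<and> X0 \<subseteq> {x. B x \<le> 0}
            \<and> {x. B x \<le> 0} \<inter> Xu = {}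
          \<longrightarrow> inv_barrier_cert f X0 Xu B)"
proof -
  have PL: "polyfun (lie_iter f j B)" for j by (rule polyfun_lie_iter[OF assms])
  have derL: "((\<lambda>t. lie_iter f j B (z t)) has_real_derivative lie_iter f (Suc j) B (z t)) (at t within S)"
    if "(z has_vector_derivative f (z t)) (at t within S)" for j z t S
    using chain_traj[where f = f, OF PL[of j] that] by (simp add: lie_iter_Suc)
  have L0: "lie_iter f 0 B = B" by (rule lie_iter_0)
  show ?thesis
  proof (intro conjI impI)
    assume cert: "inv_barrier_cert f X0 Xu B"
    define N where "N = compl_threshold B f"
    have N: "1 \<le> N" "in_poly_ideal (lie_iter f (Suc N) B) (\<lambda>j. lie_iter f j B) N"
      using threshold[OF assms] by (auto simp: N_def)
    have consec: "lie_iter f i B x \<le> 0"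
      if "1 \<le> i" "i \<le> N" "\<forall>j. j \<le> i - 1 \<longrightarrow> lie_iter f j B x = 0" for x i
      using cert that unfolding inv_barrier_cert_def N_def by blast
    show "inductive_invariant f {x. B x \<le> 0}"
      unfolding inductive_invariant_def
    proof (intro ballI allI impI)
      fix x0 T and z :: "real \<Rightarrow> real^'n" and t1
      assume x0: "x0 \<in> {x. B x \<le> 0}"
        and zz: "z 0 = x0 \<and> (\<forall>t\<in>{0..<T}. (z has_vector_derivative f (z t)) (at t within {0..<T}))"
        and t1: "t1 \<in> {0..<T}"
      have zd: "(z has_vector_derivative f (z t)) (at t within {0..<T})" if "t \<in> {0..<T}" for t
        using zz that by blast
      show "z t1 \<in> {x. B x \<le> 0}"
      proof (rule ccontr)
        assume "z t1 \<notin> {x. B x \<le> 0}"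
        then have pos1: "B (z t1) > 0" by simp
        define g where "g j t = lie_iter f j B (z t)" for j t
        have gder: "(g j has_real_derivative g (Suc j) t) (at t within {a..b})"
          if "t \<in> {a..b}" "{a..b} \<subseteq> {0..<T}" for j t a b
          unfolding g_def by (rule DERIV_subset[OF derL[OF zd]]) (use that in auto)
        have gcont: "continuous_on {a..b} (g j)" if "{a..b} \<subseteq> {0..<T}" for j a b
          unfolding continuous_on_eq_continuous_within
          using gder[OF _ that] DERIV_continuous by blast
        have zcont: "continuous_on {a..b} z" if "{a..b} \<subseteq> {0..<T}" for a b
          unfolding continuous_on_eq_continuous_within
        proof
          fix t assume t: "t \<in> {a..b}"
          have "continuous (at t within {0..<T}) z"
            using zd[of t] t that by (intro has_vector_derivative_continuous) auto
          then show "continuous (at t within {a..b}) z" using continuous_within_subset that by blast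
        qed
        have g0: "g 0 t = B (z t)" for t by (simp add: g_def L0)
        have t1pos: "0 < t1" using t1 pos1 x0 zz g0 by (cases "t1 = 0") auto
        have sub: "{0..t1} \<subseteq> {0..<T}" using t1 by auto
        define A where "A = {0..t1} \<inter> g 0 -` {..0}"
        have closedA: "closed A" unfolding A_def
          by (rule continuous_closed_preimage[OF gcont[OF sub]]) auto
        have A0: "0 \<in> A" using x0 zz t1pos by (auto simp: A_def g0)
        have bddA: "bdd_above A" by (rule bdd_aboveI[of _ t1]) (auto simp: A_def)
        define s where "s = Sup A"
        have sA: "s \<in> A" unfolding s_def using closed_contains_Sup[OF _ bddA closedA] A0 by blast
        have s0: "0 \<le> s" "s \<le> t1" using sA by (auto simp: A_def)
        have gs: "g 0 s \<le> 0" using sA by (auto simp: A_def)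
        have st1: "s < t1" using s0 gs pos1 g0[of t1] by (cases "s = t1") auto
        have after: "g 0 t > 0" if "s < t" "t \<le> t1" for t
        proof (rule ccontr)
          assume "\<not> g 0 t > 0"
          then have "t \<in> A" using that s0 by (auto simp: A_def)
          then have "t \<le> s" unfolding s_def by (rule cSup_upper[OF _ bddA])
          then show False using that by simp
        qed
        have subs: "{s..t1} \<subseteq> {0..<T}" using s0 t1 by auto
        have contra: False if e: "e > 0" "\<forall>t. s < t \<and> t < s + e \<and> t \<le> t1 \<longrightarrow> g 0 t \<le> 0" for e
        proof -
          define t where "t = min (s + e / 2) t1"
          have "s < t" "t < s + e" "t \<le> t1" using e st1 by (auto simp: t_def)
          then show False using e(2) after[of t] by force
        qed
        have gs0: "g 0 s = 0"
        proof (rule ccontr)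
          assume "g 0 s \<noteq> 0"
          then have "g 0 s < 0" using gs by simp
          from sign_lemma[of s t1 0 g, OF st1 _ gcont[OF subs] _ this]
          obtain e where "e > 0" "\<forall>t. s < t \<and> t < s + e \<and> t \<le> t1 \<longrightarrow> g 0 t < 0" by auto
          then show False using contra[of e] by force
        qed
        show False
        proof (cases "\<exists>i\<le>N. g i s \<noteq> 0")
          case True
          then obtain i0 where i0: "i0 \<le> N" "g i0 s \<noteq> 0" by auto
          define i where "i = (LEAST i. g i s \<noteq> 0)"
          have gi: "g i s \<noteq> 0" unfolding i_def by (rule LeastI[of _ i0]) (rule i0(2))
          have ilt: "g k s = 0" if "k < i" for k using not_less_Least[of k "\<lambda>i. g i s \<noteq> 0"] that
            by (auto simp: i_def)
          have iN: "i \<le> N" using Least_le[of "\<lambda>i. g i s \<noteq> 0" i0] i0 by (simp add: i_def)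
          have i1: "1 \<le> i" using gi gs0 by (cases i) auto
          have "lie_iter f i B (z s) \<le> 0"
            using ilt i1 by (intro consec[OF i1 iN]) (auto simp: g_def)
          then have gneg: "g i s < 0" using gi by (simp add: g_def)
          have der: "(g k has_real_derivative g (Suc k) t) (at t within {s..t1})"
            if "k < i" "t \<in> {s..t1}" for k t
            using gder[OF that(2) subs] .
          from sign_lemma[of s t1 i g, OF st1 der gcont[OF subs] ilt gneg]
          obtain e where "e > 0" "\<forall>t. s < t \<and> t < s + e \<and> t \<le> t1 \<longrightarrow> g 0 t < 0" by auto
          then show False using contra[of e] by force
        next
          case False
          then have allz: "g k s = 0" if "k \<le> N" for k using that by auto
          obtain h where h: "\<forall>j\<le>N. polyfun (h j)"
            "\<forall>x. lie_iter f (Suc N) B x = (\<Sum>j\<le>N. h j x * lie_iter f j B x)"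
            using N(2) unfolding in_poly_ideal_def by blast
          define c where "c j t = h j (z t)" for j t
          define F2 where "F2 t = (\<Sum>j\<le>N. \<bar>c j t\<bar>)" for t
          have contF2: "continuous_on {s..t1} F2"
            unfolding F2_def c_def
          proof (intro continuous_on_sum continuous_on_rabs)
            fix j assume "j \<in> {..N}"
            then have "polyfun (h j)" using h(1) by auto
            then show "continuous_on {s..t1} (\<lambda>t. h j (z t))"
              by (intro continuous_on_compose2[OF polyfun_continuous zcont[OF subs]]) auto
          qed
          obtain tm where tm: "tm \<in> {s..t1}" "\<forall>y\<in>{s..t1}. F2 y \<le> F2 tm"
            using continuous_attains_sup[OF compact_Icc _ contF2] st1 by auto
          have bnd: "\<bar>c j t\<bar> \<le> F2 tm" if "j \<le> N" "t \<in> {s..t1}" for j t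
          proof -
            have "\<bar>c j t\<bar> \<le> F2 t" unfolding F2_def
              by (rule member_le_sum[of j "{..N}" "\<lambda>j. \<bar>c j t\<bar>"]) (use that in auto)
            also have "\<dots> \<le> F2 tm" using tm that by auto
            finally show ?thesis .
          qed
          have lin: "g (Suc N) t = (\<Sum>j\<le>N. c j t * g j t)" for t
            using h(2) by (simp add: g_def c_def)
          have der: "(g k has_real_derivative g (Suc k) t) (at t within {s..t1})"
            if "k \<le> N" "t \<in> {s..t1}" for k t
            using gder[OF that(2) subs] .
          from zero_lemma[of s t1 N g c "F2 tm", OF st1 der lin bnd allz]
          obtain e where "e > 0" "\<forall>t. s < t \<and> t < s + e \<and> t \<le> t1 \<longrightarrow> g 0 t \<le> 0" by auto
          then show False using contra[of e] by blast
        qed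
      qed
    qed
  next
    assume inv: "inductive_invariant f {x. B x \<le> 0} \<and> X0 \<subseteq> {x. B x \<le> 0} \<and> {x. B x \<le> 0} \<inter> Xu = {}"
    show "inv_barrier_cert f X0 Xu B"
      unfolding inv_barrier_cert_def
    proof (intro conjI ballI allI impI)
      fix x assume "x \<in> X0" then show "B x \<le> 0" using inv by auto
    next
      fix x assume "x \<in> Xu"
      then have "\<not> B x \<le> 0" using inv by blast
      then show "0 < B x" by simp
    next
      fix x i
      assume i: "1 \<le> i \<and> i \<le> compl_threshold B f" and zs: "\<forall>j. j \<le> i - 1 \<longrightarrow> lie_iter f j B x = 0"
      show "lie_iter f i B x \<le> 0"
      proof (rule ccontr)
        assume "\<not> lie_iter f i B x \<le> 0"
        then have pos: "lie_iter f i B x > 0" by simp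
        obtain \<delta> z where d: "\<delta> > 0" "z 0 = x"
          "\<forall>t\<in>{0..<\<delta>}. (z has_vector_derivative f (z t)) (at t within {0..<\<delta>})"
          using local_existence[OF assms(1), of x] by blast
        have "B x = 0" using zs L0 by (metis zero_le)
        then have "x \<in> {x. B x \<le> 0}" by simp
        then have stay: "B (z t) \<le> 0" if "t \<in> {0..<\<delta>}" for t
          using inv d that unfolding inductive_invariant_def by blast
        define g where "g j t = - lie_iter f j B (z t)" for j t
        define b where "b = \<delta> / 2"
        have b: "0 < b" "{0..b} \<subseteq> {0..<\<delta>}" using d by (auto simp: b_def)
        have gder: "(g j has_real_derivative g (Suc j) t) (at t within {0..b})" if "t \<in> {0..b}" for j t
        proof -
          have "t \<in> {0..<\<delta>}" using that b by auto
          then have "((\<lambda>t. lie_iter f j B (z t)) has_real_derivative lie_iter f (Suc j) B (z t)) (at t within {0..<\<delta>})"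
            using d(3) derL by blast
          then have "((\<lambda>t. - lie_iter f j B (z t)) has_real_derivative - lie_iter f (Suc j) B (z t)) (at t within {0..<\<delta>})"
            by (rule DERIV_minus)
          then show ?thesis unfolding g_def by (rule DERIV_subset) (use b in auto)
        qed
        have gcont: "continuous_on {0..b} (g i)"
          unfolding continuous_on_eq_continuous_within
          using gder DERIV_continuous by blast
        have gz: "g k 0 = 0" if "k < i" for k using zs that d(2) by (auto simp: g_def)
        have gneg: "g i 0 < 0" using pos d(2) by (simp add: g_def)
        from sign_lemma[of 0 b i g, OF b(1) gder gcont gz gneg]
        obtain e where e: "e > 0" "\<forall>t. 0 < t \<and> t < 0 + e \<and> t \<le> b \<longrightarrow> g 0 t < 0" by auto
        define t where "t = min (e / 2) b"
        have t: "0 < t" "t < e" "t \<le> b" using e b by (auto simp: t_def)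
        then have "g 0 t < 0" using e by auto
        then have "B (z t) > 0" by (simp add: g_def L0)
        moreover have "t \<in> {0..<\<delta>}" using t d by (auto simp: b_def)
        ultimately show False using stay by force
      qed
    qed
  qed
qed

end
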